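(* Let $T=((\Omega,\mathcal{A}),\{(\Omega,\mathcal{M}_i)\}_{i\in N},\{t_i\}_{i\in N})$ be a type space. If $T$ admits a money pump then it admits a universal money pump; and if $T$ admits a universal money pump then it admits a strong money pump.
   Context: A field on a set $X$ is a collection of subsets of $X$ containing $X$ and closed under complements and finite intersections. For a field $\mathcal{A}$ on $\Omega$, $\mathrm{pba}(\Omega,\mathcal{A})$ is the set of finitely additive nonnegative $P:\mathcal{A}\to\mathbb{R}$ with $P(\Omega)=1$; $B(\Omega,\mathcal{A})$ the sup-norm closure of the linear span of indicators of sets in $\mathcal{A}$; bounded finitely additive set functions carry the weak* topology (weakest making $\mu\mapsto\int f\,d\mu$ continuous for all $f\in B(\Omega,\mathcal{A})$), $\overline{\,\cdot\,}^\ast$ denotes weak* closure. A type space: $N$ a nonempty set of players, fields $\mathcal{M}_i\subseteq\mathcal{A}$ on a set $\Omega$, $t_i:\Omega\times\mathcal{A}\to[0,1]$ with $t_i(\omega,\cdot)\in\mathrm{pba}(\Omega,\mathcal{A})$, $t_i(\cdot,E)\in B(\Omega,\mathcal{M}_i)$ for $E\in\mathcal{A}$, and $t_i(\omega,E)=1$ whenever $E\in\mathcal{M}_i$, $\omega\in E$. $\Pi_i=\overline{\mathrm{conv}\{t_i(\omega,\cdot):\omega\in\Omega\}}^\ast$. For $I\subseteq N$, a nonempty $S\subseteq\Omega$ is an $I$-common certainty component if there is $E\in\mathcal{A}$, $E\subseteq S$, with $t_i(\omega,E)=1$ for all $\omega\in S$, $i\in I$; a set $E$ is $I$-commonly certain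 at $\omega$ if there is such $S$ with $\omega\in S\subseteq E$. A semi-bet is $(f_i)_{i\in I}\subseteq B(\Omega,\mathcal{A})$, $I\subseteq N$ finite, such that for every $\omega$ the set $\{\omega':\int f_i\,dt_i(\omega',\cdot)\ge0\ \forall i\in I\}$ is $I$-commonly certain at $\omega$. $T$ admits a money pump if for every $P\in\mathrm{pba}(\Omega,\mathcal{A})$ there is a semi-bet $(f_i)_{i\in I}$ with $\int\sum_{i\in I}f_i\,dP<0$. $T$ admits a universal money pump if there exist a finite $I\subseteq N$ and an $I$-common certainty component $S$ such that for every $P\in\mathrm{pba}(\Omega,\mathcal{A})$ with $\inf\{P(E):E\in\mathcal{A},S\subseteq E\}>0$ there is a semi-bet $(f_i)_{i\in I}$ with $\int\sum_{i\in I}f_i\,dP<0$. $T$ admits a strong money pump if there is a finite $I\subseteq N$ such that for every $P\in\mathrm{pba}(\Omega,\mathcal{A})$ there is a semi-bet $(f_i)_{i\in I}$ with $\int\sum_{i\in I}f_i\,dP\le0$ and some $P^\ast\in\{P\}\cup\bigcup_{i\in I}\Pi_i$ with $\int\sum_{i\in I}f_i\,dP^\ast\ne0$. *)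

theory Defs
  imports "HOL-Analysis.Analysis"
begin

text \<open>The state space Omega is the universe of the type 'w; set functions are
  maps 'w set => real which vanish off the field (convention).\<close>

definition is_field :: "'w set set \<Rightarrow> bool" where
  "is_field A \<longleftrightarrow> UNIV \<in> A \<and> (\<forall>E\<in>A. - E \<in> A) \<and> (\<forall>E\<in>A. \<forall>F\<in>A. E \<inter> F \<in> A)"

definition fin_additive :: "'w set set \<Rightarrow> ('w set \<Rightarrow> real) \<Rightarrow> bool" where
  "fin_additive A \<mu> \<longleftrightarrow> (\<forall>E\<in>A. \<forall>F\<in>A. E \<inter> F = {} \<longrightarrow> \<mu> (E \<union> F) = \<mu> E + \<mu> F)"

definition ba :: "'w set set \<Rightarrow> ('w set \<Rightarrow> real) set" where
  "ba A = {\<mu>. (\<forall>E. E \<notin> A \<longrightarrow> \<mu> E = 0) \<and> fin_additive A \<mu> \<and> (\<exists>K. \<forall>E\<in>A. \<bar>\<mu> E\<bar> \<le> K)}"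

definition pba :: "'w set set \<Rightarrow> ('w set \<Rightarrow> real) set" where
  "pba A = {P. (\<forall>E. E \<notin> A \<longrightarrow> P E = 0) \<and> (\<forall>E\<in>A. 0 \<le> P E) \<and> fin_additive A P \<and> P UNIV = 1}"

definition simple_fns :: "'w set set \<Rightarrow> ('w \<Rightarrow> real) set" where
  "simple_fns A = {g. \<exists>F c. finite F \<and> F \<subseteq> A \<and> g = (\<lambda>x. \<Sum>E\<in>F. c E * indicator E x)}"

definition Bfun :: "'w set set \<Rightarrow> ('w \<Rightarrow> real) set" where
  "Bfun A = {f. \<forall>\<epsilon>>0. \<exists>g\<in>simple_fns A. \<forall>x. \<bar>f x - g x\<bar> < \<epsilon>}"

definition fa_integral :: "'w set set \<Rightarrow> ('w set \<Rightarrow> real) \<Rightarrow> ('w \<Rightarrow> real) \<Rightarrow> real" where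
  "fa_integral A \<mu> f = (THE r. \<forall>\<epsilon>>0. \<exists>\<delta>>0. \<forall>F c. finite F \<and> F \<subseteq> A \<and>
       (\<forall>x. \<bar>f x - (\<Sum>E\<in>F. c E * indicator E x)\<bar> < \<delta>) \<longrightarrow>
       \<bar>(\<Sum>E\<in>F. c E * \<mu> E) - r\<bar> < \<epsilon>)"

definition weak_star_top :: "'w set set \<Rightarrow> ('w set \<Rightarrow> real) topology" where
  "weak_star_top A = topology_generated_by
     {{\<mu> \<in> ba A. fa_integral A \<mu> f \<in> U} | f U. f \<in> Bfun A \<and> open U}"

definition conv_hull_sf :: "('w set \<Rightarrow> real) set \<Rightarrow> ('w set \<Rightarrow> real) set" where
  "conv_hull_sf C = {\<mu>. \<exists>(n::nat) w \<nu>. (\<forall>k<n. 0 \<le> w k \<and> \<nu> k \<in> C) \<and> (\<Sum>k<n. w k) = 1 \<and>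
       \<mu> = (\<lambda>E. \<Sum>k<n. w k * \<nu> k E)}"

definition Pi_set :: "'w set set \<Rightarrow> ('i \<Rightarrow> 'w \<Rightarrow> 'w set \<Rightarrow> real) \<Rightarrow> 'i \<Rightarrow> ('w set \<Rightarrow> real) set" where
  "Pi_set A t i = (weak_star_top A) closure_of (conv_hull_sf {t i \<omega> | \<omega>. True})"

definition type_space :: "'i set \<Rightarrow> 'w set set \<Rightarrow> ('i \<Rightarrow> 'w set set) \<Rightarrow> ('i \<Rightarrow> 'w \<Rightarrow> 'w set \<Rightarrow> real) \<Rightarrow> bool" where
  "type_space N A M t \<longleftrightarrow> N \<noteq> {} \<and> is_field A \<and>
     (\<forall>i\<in>N. is_field (M i) \<and> M i \<subseteq> A) \<and>
     (\<forall>i\<in>N. \<forall>\<omega>. t i \<omega> \<in> pba A \<and> (\<forall>E. 0 \<le> t i \<omega> E \<and> t i \<omega> E \<le> 1)) \<and>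
     (\<forall>i\<in>N. \<forall>E\<in>A. (\<lambda>\<omega>. t i \<omega> E) \<in> Bfun (M i)) \<and>
     (\<forall>i\<in>N. \<forall>E\<in>M i. \<forall>\<omega>\<in>E. t i \<omega> E = 1)"

definition cc_component :: "'w set set \<Rightarrow> ('i \<Rightarrow> 'w \<Rightarrow> 'w set \<Rightarrow> real) \<Rightarrow> 'i set \<Rightarrow> 'w set \<Rightarrow> bool" where
  "cc_component A t I S \<longleftrightarrow> S \<noteq> {} \<and> (\<exists>E\<in>A. E \<subseteq> S \<and> (\<forall>\<omega>\<in>S. \<forall>i\<in>I. t i \<omega> E = 1))"

definition commonly_certain :: "'w set set \<Rightarrow> ('i \<Rightarrow> 'w \<Rightarrow> 'w set \<Rightarrow> real) \<Rightarrow> 'i set \<Rightarrow> 'w set \<Rightarrow> 'w \<Rightarrow> bool" where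
  "commonly_certain A t I E \<omega> \<longleftrightarrow> (\<exists>S. cc_component A t I S \<and> \<omega> \<in> S \<and> S \<subseteq> E)"

definition semi_bet :: "'i set \<Rightarrow> 'w set set \<Rightarrow> ('i \<Rightarrow> 'w \<Rightarrow> 'w set \<Rightarrow> real) \<Rightarrow> 'i set \<Rightarrow> ('i \<Rightarrow> 'w \<Rightarrow> real) \<Rightarrow> bool" where
  "semi_bet N A t I f \<longleftrightarrow> finite I \<and> I \<subseteq> N \<and> (\<forall>i\<in>I. f i \<in> Bfun A) \<and>
     (\<forall>\<omega>. commonly_certain A t I {\<omega>'. \<forall>i\<in>I. fa_integral A (t i \<omega>') (f i) \<ge> 0} \<omega>)"

definition money_pump :: "'i set \<Rightarrow> 'w set set \<Rightarrow> ('i \<Rightarrow> 'w \<Rightarrow> 'w set \<Rightarrow> real) \<Rightarrow> bool" where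
  "money_pump N A t \<longleftrightarrow> (\<forall>P\<in>pba A. \<exists>I f. semi_bet N A t I f \<and>
       fa_integral A P (\<lambda>\<omega>. \<Sum>i\<in>I. f i \<omega>) < 0)"

definition universal_money_pump :: "'i set \<Rightarrow> 'w set set \<Rightarrow> ('i \<Rightarrow> 'w \<Rightarrow> 'w set \<Rightarrow> real) \<Rightarrow> bool" where
  "universal_money_pump N A t \<longleftrightarrow> (\<exists>I S. finite I \<and> I \<subseteq> N \<and> cc_component A t I S \<and>
     (\<forall>P\<in>pba A. Inf {P E | E. E \<in> A \<and> S \<subseteq> E} > 0 \<longrightarrow>
        (\<exists>f. semi_bet N A t I f \<and> fa_integral A P (\<lambda>\<omega>. \<Sum>i\<in>I. f i \<omega>) < 0)))"

definition strong_money_pump :: "'i set \<Rightarrow> 'w set set \<Rightarrow> ('i \<Rightarrow> 'w \<Rightarrow> 'w set \<Rightarrow> real) \<Rightarrow> bool" where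
  "strong_money_pump N A t \<longleftrightarrow> (\<exists>I. finite I \<and> I \<subseteq> N \<and>
     (\<forall>P\<in>pba A. \<exists>f. semi_bet N A t I f \<and> fa_integral A P (\<lambda>\<omega>. \<Sum>i\<in>I. f i \<omega>) \<le> 0 \<and>
        (\<exists>P'\<in>{P} \<union> (\<Union>i\<in>I. Pi_set A t i). fa_integral A P' (\<lambda>\<omega>. \<Sum>i\<in>I. f i \<omega>) \<noteq> 0)))"

end

theory Submission
  imports Defs
begin


definition sf :: "'w set set \<Rightarrow> ('w set \<Rightarrow> real) \<Rightarrow> 'w \<Rightarrow> real" where
  "sf F c = (\<lambda>x. \<Sum>E\<in>F. c E * indicator E x)"

definition si :: "('w set \<Rightarrow> real) \<Rightarrow> 'w set set \<Rightarrow> ('w set \<Rightarrow> real) \<Rightarrow> real" where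
  "si \<mu> F c = (\<Sum>E\<in>F. c E * \<mu> E)"

lemma field_UNIV: "is_field A \<Longrightarrow> UNIV \<in> A" by (simp add: is_field_def)
lemma field_compl: "is_field A \<Longrightarrow> E \<in> A \<Longrightarrow> - E \<in> A" by (simp add: is_field_def)
lemma field_Int: "is_field A \<Longrightarrow> E \<in> A \<Longrightarrow> F \<in> A \<Longrightarrow> E \<inter> F \<in> A" by (simp add: is_field_def)
lemma field_empty: "is_field A \<Longrightarrow> {} \<in> A"
proof -
  assume a: "is_field A"
  have "- UNIV \<in> A" using field_compl[OF a field_UNIV[OF a]] .
  then show ?thesis by simp
qed
lemma field_Un: "is_field A \<Longrightarrow> E \<in> A \<Longrightarrow> F \<in> A \<Longrightarrow> E \<union> F \<in> A"
proof -
  assume a: "is_field A" "E \<in> A" "F \<in> A"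
  have "- (- E \<inter> - F) \<in> A" using a by (intro field_compl field_Int) auto
  then show ?thesis by simp
qed
lemma field_Diff: "is_field A \<Longrightarrow> E \<in> A \<Longrightarrow> F \<in> A \<Longrightarrow> E - F \<in> A"
  by (simp add: Diff_eq field_Int field_compl)

lemma pba_add: "P \<in> pba A \<Longrightarrow> E \<in> A \<Longrightarrow> F \<in> A \<Longrightarrow> E \<inter> F = {} \<Longrightarrow> P (E \<union> F) = P E + P F"
  by (simp add: pba_def fin_additive_def)
lemma pba_nonneg: "P \<in> pba A \<Longrightarrow> 0 \<le> P E"
  by (cases "E \<in> A") (auto simp: pba_def)
lemma pba_out: "P \<in> pba A \<Longrightarrow> E \<notin> A \<Longrightarrow> P E = 0"
  by (auto simp: pba_def)
lemma pba_UNIV: "P \<in> pba A \<Longrightarrow> P UNIV = 1"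
  by (auto simp: pba_def)
lemma pba_empty: "is_field A \<Longrightarrow> P \<in> pba A \<Longrightarrow> P {} = 0"
  using pba_add[of P A "{}" "{}"] field_empty by auto
lemma pba_mono: "is_field A \<Longrightarrow> P \<in> pba A \<Longrightarrow> E \<in> A \<Longrightarrow> F \<in> A \<Longrightarrow> E \<subseteq> F \<Longrightarrow> P E \<le> P F"
proof -
  assume a: "is_field A" "P \<in> pba A" "E \<in> A" "F \<in> A" "E \<subseteq> F"
  have "F = E \<union> (F - E)" using a by auto
  then have "P F = P (E \<union> (F - E))" by simp
  also have "\<dots> = P E + P (F - E)" using a by (intro pba_add) (auto intro: field_Diff)
  finally show ?thesis using pba_nonneg[OF a(2)] by auto
qed
lemma pba_le1: "is_field A \<Longrightarrow> P \<in> pba A \<Longrightarrow> P E \<le> 1"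
proof -
  assume a: "is_field A" "P \<in> pba A"
  show ?thesis
  proof (cases "E \<in> A")
  case True
  then show ?thesis using pba_mono[OF a True field_UNIV[OF a(1)]] pba_UNIV[OF a(2)] by simp
next
  case False
  then show ?thesis using pba_out[OF a(2) False] by simp
  qed
qed

lemma sint_le:
  assumes fA: "is_field A" and P: "P \<in> pba A" and fin: "finite F"
  shows "F \<subseteq> A \<Longrightarrow> G \<in> A \<Longrightarrow> (\<forall>x\<in>G. sf F c x \<le> d) \<Longrightarrow> (\<Sum>E\<in>F. c E * P (E \<inter> G)) \<le> d * P G"
  using fin
proof (induction F arbitrary: d G rule: finite_induct)
  case empty
  then show ?case
  proof (cases "G = {}")
    case True then show ?thesis using pba_empty[OF fA P] by simp
  next
    case False
    then obtain x where "x \<in> G" by auto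
    then have "0 \<le> d" using empty by (auto simp: sf_def)
    then show ?thesis using pba_nonneg[OF P] by simp
  qed
next
  case (insert E0 F)
  define G1 where "G1 = G \<inter> E0"
  define G2 where "G2 = G \<inter> - E0"
  have E0: "E0 \<in> A" and FA: "F \<subseteq> A" using insert by auto
  have G1: "G1 \<in> A" and G2: "G2 \<in> A" using insert E0 fA unfolding G1_def G2_def
    by (auto intro: field_Int field_compl)
  have split: "P (E \<inter> G) = P (E \<inter> G1) + P (E \<inter> G2)" if "E \<in> A" for E
  proof -
    have "E \<inter> G = (E \<inter> G1) \<union> (E \<inter> G2)" "(E \<inter> G1) \<inter> (E \<inter> G2) = {}"
      unfolding G1_def G2_def by auto
    then show ?thesis using pba_add[OF P, of "E \<inter> G1" "E \<inter> G2"] field_Int[OF fA that] G1 G2 by simp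
  qed
  have PG: "P G = P G1 + P G2"
  proof -
    have "G = G1 \<union> G2" "G1 \<inter> G2 = {}" unfolding G1_def G2_def by auto
    then show ?thesis using pba_add[OF P G1 G2] by simp
  qed
  have sfi: "sf (insert E0 F) c x = c E0 * indicator E0 x + sf F c x" for x
    unfolding sf_def by (rule sum.insert[OF insert.hyps(1,2)])
  have h1: "\<forall>x\<in>G1. sf F c x \<le> d - c E0"
  proof
    fix x assume "x \<in> G1"
    then have "x \<in> G" "x \<in> E0" unfolding G1_def by auto
    moreover have "sf (insert E0 F) c x \<le> d" using insert.prems(3) \<open>x \<in> G\<close> by blast
    ultimately show "sf F c x \<le> d - c E0" using sfi[of x] by simp
  qed
  have h2: "\<forall>x\<in>G2. sf F c x \<le> d"
  proof
    fix x assume "x \<in> G2"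
    then have "x \<in> G" "x \<notin> E0" unfolding G2_def by auto
    moreover have "sf (insert E0 F) c x \<le> d" using insert.prems(3) \<open>x \<in> G\<close> by blast
    ultimately show "sf F c x \<le> d" using sfi[of x] by simp
  qed
  have IH1: "(\<Sum>E\<in>F. c E * P (E \<inter> G1)) \<le> (d - c E0) * P G1"
    using insert.IH[OF FA G1 h1] .
  have IH2: "(\<Sum>E\<in>F. c E * P (E \<inter> G2)) \<le> d * P G2"
    using insert.IH[OF FA G2 h2] .
  have "(\<Sum>E\<in>F. c E * P (E \<inter> G)) = (\<Sum>E\<in>F. c E * P (E \<inter> G1)) + (\<Sum>E\<in>F. c E * P (E \<inter> G2))"
    using FA split by (simp add: distrib_left sum.distrib subset_iff)
  moreover have "P (E0 \<inter> G) = P G1" unfolding G1_def by (simp add: Int_commute)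
  ultimately have "(\<Sum>E\<in>insert E0 F. c E * P (E \<inter> G)) =
     c E0 * P G1 + (\<Sum>E\<in>F. c E * P (E \<inter> G1)) + (\<Sum>E\<in>F. c E * P (E \<inter> G2))"
    using insert.hyps by simp
  also have "\<dots> \<le> c E0 * P G1 + (d - c E0) * P G1 + d * P G2" using IH1 IH2 by linarith
  also have "\<dots> = d * P G" using PG by (simp add: algebra_simps)
  finally show ?case .
qed

lemma sint_upper:
  assumes "is_field A" "P \<in> pba A" "finite F" "F \<subseteq> A" "\<forall>x. sf F c x \<le> d"
  shows "si P F c \<le> d"
  using sint_le[OF assms(1-4) field_UNIV[OF assms(1)], of c d] assms(5) pba_UNIV[OF assms(2)]
  by (simp add: si_def)

lemma sf_neg: "sf F (\<lambda>E. - c E) x = - sf F c x"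
  by (simp add: sf_def sum_negf)
lemma si_neg: "si P F (\<lambda>E. - c E) = - si P F c"
  by (simp add: si_def sum_negf)

lemma sint_lower:
  assumes "is_field A" "P \<in> pba A" "finite F" "F \<subseteq> A" "\<forall>x. sf F c x \<ge> b"
  shows "si P F c \<ge> b"
  using sint_upper[OF assms(1-4), of "\<lambda>E. - c E" "-b"] assms(5) by (simp add: sf_neg si_neg)

lemma sint_abs:
  assumes "is_field A" "P \<in> pba A" "finite F" "F \<subseteq> A" "\<forall>x. \<bar>sf F c x\<bar> \<le> d"
  shows "\<bar>si P F c\<bar> \<le> d"
proof -
  have "sf F c x \<le> d \<and> sf F c x \<ge> -d" for x
  proof -
    have "\<bar>sf F c x\<bar> \<le> d" using assms(5) by blast
    then show ?thesis by arith
  qed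
  then have "\<forall>x. sf F c x \<le> d" "\<forall>x. sf F c x \<ge> -d" by auto
  then have "si P F c \<le> d" "si P F c \<ge> -d"
    using sint_upper[OF assms(1-4)] sint_lower[OF assms(1-4)] by auto
  then show ?thesis by (simp add: abs_le_iff)
qed

definition ext :: "'w set set \<Rightarrow> ('w set \<Rightarrow> real) \<Rightarrow> 'w set \<Rightarrow> real" where
  "ext F c E = (if E \<in> F then c E else 0)"

lemma sum_ext: "finite G \<Longrightarrow> F \<subseteq> G \<Longrightarrow> (\<Sum>E\<in>G. ext F c E * h E) = (\<Sum>E\<in>F. c E * h E)"
proof -
  assume a: "finite G" "F \<subseteq> G"
  have "(\<Sum>E\<in>G. ext F c E * h E) = (\<Sum>E\<in>G. if E \<in> F then c E * h E else 0)"
    by (rule sum.cong) (auto simp: ext_def)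
  also have "\<dots> = (\<Sum>E\<in>G \<inter> F. c E * h E)" using a by (simp add: sum.If_cases)
  also have "G \<inter> F = F" using a by auto
  finally show ?thesis .
qed

lemma comb:
  assumes "finite F1" "finite F2"
  shows "sf (F1 \<union> F2) (\<lambda>E. a * ext F1 c1 E + ext F2 c2 E) x = a * sf F1 c1 x + sf F2 c2 x"
    and "si \<mu> (F1 \<union> F2) (\<lambda>E. a * ext F1 c1 E + ext F2 c2 E) = a * si \<mu> F1 c1 + si \<mu> F2 c2"
proof -
  have f: "finite (F1 \<union> F2)" using assms by simp
  have gen: "(\<Sum>E\<in>F1 \<union> F2. (a * ext F1 c1 E + ext F2 c2 E) * h E)
     = a * (\<Sum>E\<in>F1. c1 E * h E) + (\<Sum>E\<in>F2. c2 E * h E)" for h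
  proof -
    have "(\<Sum>E\<in>F1 \<union> F2. (a * ext F1 c1 E + ext F2 c2 E) * h E)
       = (\<Sum>E\<in>F1 \<union> F2. a * (ext F1 c1 E * h E)) + (\<Sum>E\<in>F1 \<union> F2. ext F2 c2 E * h E)"
      by (simp add: distrib_right sum.distrib mult.assoc)
    also have "\<dots> = a * (\<Sum>E\<in>F1 \<union> F2. ext F1 c1 E * h E) + (\<Sum>E\<in>F1 \<union> F2. ext F2 c2 E * h E)"
      by (simp add: sum_distrib_left)
    also have "\<dots> = a * (\<Sum>E\<in>F1. c1 E * h E) + (\<Sum>E\<in>F2. c2 E * h E)"
      using sum_ext[OF f, of F1 c1 h] sum_ext[OF f, of F2 c2 h] by simp
    finally show ?thesis .
  qed
  show "sf (F1 \<union> F2) (\<lambda>E. a * ext F1 c1 E + ext F2 c2 E) x = a * sf F1 c1 x + sf F2 c2 x"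
    unfolding sf_def by (rule gen)
  show "si \<mu> (F1 \<union> F2) (\<lambda>E. a * ext F1 c1 E + ext F2 c2 E) = a * si \<mu> F1 c1 + si \<mu> F2 c2"
    unfolding si_def by (rule gen)
qed

lemma sint_diff:
  assumes "is_field A" "P \<in> pba A" "finite F1" "F1 \<subseteq> A" "finite F2" "F2 \<subseteq> A"
    and "\<forall>x. \<bar>sf F1 c1 x - sf F2 c2 x\<bar> \<le> d"
  shows "\<bar>si P F1 c1 - si P F2 c2\<bar> \<le> d"
proof -
  let ?c = "\<lambda>E. (-1) * ext F2 c2 E + ext F1 c1 E"
  have "\<forall>x. \<bar>sf (F2 \<union> F1) ?c x\<bar> \<le> d"
  proof
    fix x
    have "sf (F2 \<union> F1) ?c x = -1 * sf F2 c2 x + sf F1 c1 x" by (rule comb(1)[OF assms(5,3)])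
    then show "\<bar>sf (F2 \<union> F1) ?c x\<bar> \<le> d" using assms(7) by simp
  qed
  then have "\<bar>si P (F2 \<union> F1) ?c\<bar> \<le> d"
    using assms by (intro sint_abs[OF assms(1,2)]) auto
  moreover have "si P (F2 \<union> F1) ?c = -1 * si P F2 c2 + si P F1 c1" by (rule comb(2)[OF assms(5,3)])
  ultimately show ?thesis by simp
qed




lemma bfun_approx:
  assumes "g \<in> Bfun A" "\<eta> > 0"
  shows "\<exists>F c. finite F \<and> F \<subseteq> A \<and> (\<forall>x. \<bar>g x - sf F c x\<bar> < \<eta>)"
proof -
  obtain s where s: "s \<in> simple_fns A" "\<forall>x. \<bar>g x - s x\<bar> < \<eta>"
    using assms unfolding Bfun_def by blast
  then obtain F c where "finite F" "F \<subseteq> A" "s = (\<lambda>x. \<Sum>E\<in>F. c E * indicator E x)"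
    unfolding simple_fns_def by blast
  then show ?thesis using s(2) unfolding sf_def by blast
qed

lemma small_zero:
  fixes x K :: real
  assumes "\<And>\<eta>. \<eta> > 0 \<Longrightarrow> \<bar>x\<bar> \<le> K * \<eta>"
  shows "x = 0"
proof (rule ccontr)
  assume "x \<noteq> 0"
  define \<eta> where "\<eta> = \<bar>x\<bar> / (2 * (\<bar>K\<bar> + 1))"
  have "\<eta> > 0" using \<open>x \<noteq> 0\<close> unfolding \<eta>_def by (simp add: add_pos_nonneg)
  then have "\<bar>x\<bar> \<le> K * \<eta>" using assms by blast
  also have "\<dots> \<le> \<bar>K\<bar> * \<eta>" using \<open>\<eta> > 0\<close> by (simp add: mult_right_mono)
  also have "\<dots> < \<bar>x\<bar>"
  proof -
    define q where "q = \<bar>K\<bar> / (2 * (\<bar>K\<bar> + 1))"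
    have "\<bar>K\<bar> * \<eta> = \<bar>x\<bar> * q" unfolding \<eta>_def q_def by simp
    moreover have "q < 1" unfolding q_def by (simp add: add_pos_nonneg)
    then have "\<bar>x\<bar> * q < \<bar>x\<bar> * 1" using \<open>x \<noteq> 0\<close> by (intro mult_strict_left_mono) auto
    ultimately show ?thesis by simp
  qed
  finally show False by simp
qed

lemma small_le:
  fixes b y K :: real
  assumes "\<And>\<eta>. \<eta> > 0 \<Longrightarrow> b \<le> y + K * \<eta>"
  shows "b \<le> y"
proof (rule ccontr)
  assume "\<not> b \<le> y"
  define \<eta> where "\<eta> = (b - y) / (2 * (\<bar>K\<bar> + 1))"
  have "\<eta> > 0" using \<open>\<not> b \<le> y\<close> unfolding \<eta>_def by (simp add: add_pos_nonneg)
  then have "b - y \<le> K * \<eta>" using assms by force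
  also have "\<dots> \<le> \<bar>K\<bar> * \<eta>" using \<open>\<eta> > 0\<close> by (simp add: mult_right_mono)
  also have "\<dots> < b - y"
  proof -
    define q where "q = \<bar>K\<bar> / (2 * (\<bar>K\<bar> + 1))"
    have "\<bar>K\<bar> * \<eta> = (b - y) * q" unfolding \<eta>_def q_def by simp
    moreover have "q < 1" unfolding q_def by (simp add: add_pos_nonneg)
    then have "(b - y) * q < (b - y) * 1" using \<open>\<not> b \<le> y\<close> by (intro mult_strict_left_mono) auto
    ultimately show ?thesis by simp
  qed
  finally show False by simp
qed

lemma approx_pair:
  assumes "is_field A" "P \<in> pba A" "finite F1" "F1 \<subseteq> A" "finite F2" "F2 \<subseteq> A"
    and "\<forall>x. \<bar>g x - sf F1 c1 x\<bar> \<le> d1" "\<forall>x. \<bar>g x - sf F2 c2 x\<bar> \<le> d2"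
  shows "si P F1 c1 - d1 \<le> si P F2 c2 + d2"
proof -
  have "\<forall>x. \<bar>sf F1 c1 x - sf F2 c2 x\<bar> \<le> d1 + d2"
  proof
    fix x
    have "\<bar>g x - sf F1 c1 x\<bar> \<le> d1" "\<bar>g x - sf F2 c2 x\<bar> \<le> d2" using assms(7,8) by blast+
    then show "\<bar>sf F1 c1 x - sf F2 c2 x\<bar> \<le> d1 + d2" by arith
  qed
  from sint_diff[OF assms(1-6) this] show ?thesis by arith
qed

lemma int_char:
  assumes fA: "is_field A" and P: "P \<in> pba A" and g: "g \<in> Bfun A"
    and hprop: "\<And>F c d. finite F \<Longrightarrow> F \<subseteq> A \<Longrightarrow> \<forall>x. \<bar>g x - sf F c x\<bar> \<le> d \<Longrightarrow> \<bar>si P F c - r\<bar> \<le> d"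
  shows "fa_integral A P g = r"
  unfolding fa_integral_def
proof (rule the_equality)
  show "\<forall>\<epsilon>>0. \<exists>\<delta>>0. \<forall>F c. finite F \<and> F \<subseteq> A \<and> (\<forall>x. \<bar>g x - (\<Sum>E\<in>F. c E * indicator E x)\<bar> < \<delta>) \<longrightarrow>
       \<bar>(\<Sum>E\<in>F. c E * P E) - r\<bar> < \<epsilon>"
  proof (intro allI impI)
    fix \<epsilon> :: real assume e: "\<epsilon> > 0"
    show "\<exists>\<delta>>0. \<forall>F c. finite F \<and> F \<subseteq> A \<and> (\<forall>x. \<bar>g x - (\<Sum>E\<in>F. c E * indicator E x)\<bar> < \<delta>) \<longrightarrow>
       \<bar>(\<Sum>E\<in>F. c E * P E) - r\<bar> < \<epsilon>"
    proof (intro exI[of _ "\<epsilon>/2"] conjI allI impI)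
      show "\<epsilon>/2 > 0" using e by simp
      fix F c assume a: "finite F \<and> F \<subseteq> A \<and> (\<forall>x. \<bar>g x - (\<Sum>E\<in>F. c E * indicator E x)\<bar> < \<epsilon>/2)"
      then have "\<forall>x. \<bar>g x - sf F c x\<bar> < \<epsilon>/2" unfolding sf_def by blast
      then have "\<forall>x. \<bar>g x - sf F c x\<bar> \<le> \<epsilon>/2" by (simp add: less_imp_le)
      then have "\<bar>si P F c - r\<bar> \<le> \<epsilon>/2" using hprop a by blast
      then show "\<bar>(\<Sum>E\<in>F. c E * P E) - r\<bar> < \<epsilon>" using e unfolding si_def by simp
    qed
  qed
next
  fix r'
  assume Q: "\<forall>\<epsilon>>0. \<exists>\<delta>>0. \<forall>F c. finite F \<and> F \<subseteq> A \<and> (\<forall>x. \<bar>g x - (\<Sum>E\<in>F. c E * indicator E x)\<bar> < \<delta>) \<longrightarrow>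
       \<bar>(\<Sum>E\<in>F. c E * P E) - r'\<bar> < \<epsilon>"
  have "r' - r = 0"
  proof (rule small_zero[where K=2])
    fix \<epsilon> :: real assume e: "\<epsilon> > 0"
    obtain \<delta> where d: "\<delta> > 0" "\<forall>F c. finite F \<and> F \<subseteq> A \<and> (\<forall>x. \<bar>g x - (\<Sum>E\<in>F. c E * indicator E x)\<bar> < \<delta>) \<longrightarrow>
       \<bar>(\<Sum>E\<in>F. c E * P E) - r'\<bar> < \<epsilon>" using Q e by blast
    obtain F c where Fc: "finite F" "F \<subseteq> A" "\<forall>x. \<bar>g x - sf F c x\<bar> < min \<delta> \<epsilon>"
      using bfun_approx[OF g, of "min \<delta> \<epsilon>"] d e by auto
    have "\<bar>si P F c - r'\<bar> < \<epsilon>" using d(2) Fc unfolding sf_def si_def by auto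
    moreover have "\<bar>si P F c - r\<bar> \<le> \<epsilon>" using hprop[OF Fc(1,2)] Fc(3) by (simp add: less_imp_le)
    ultimately show "\<bar>r' - r\<bar> \<le> 2 * \<epsilon>" by arith
  qed
  then show "r' = r" by simp
qed

lemma int_approx:
  assumes fA: "is_field A" and P: "P \<in> pba A" and g: "g \<in> Bfun A"
    and F: "finite F" "F \<subseteq> A" and ap: "\<forall>x. \<bar>g x - sf F c x\<bar> \<le> d"
  shows "\<bar>si P F c - fa_integral A P g\<bar> \<le> d"
proof -
  define L where "L = {si P F c - d | F c d. finite F \<and> F \<subseteq> A \<and> (\<forall>x. \<bar>g x - sf F c x\<bar> \<le> d)}"
  obtain F0 c0 where F0: "finite F0" "F0 \<subseteq> A" "\<forall>x. \<bar>g x - sf F0 c0 x\<bar> < 1"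
    using bfun_approx[OF g, of 1] by auto
  have F0': "\<forall>x. \<bar>g x - sf F0 c0 x\<bar> \<le> 1" using F0(3) by (simp add: less_imp_le)
  have bd: "l \<le> si P F2 c2 + d2" if hyp: "l \<in> L" "finite F2" "F2 \<subseteq> A" "\<forall>x. \<bar>g x - sf F2 c2 x\<bar> \<le> d2" for l F2 c2 d2
  proof -
    obtain F1 c1 d1 where 1: "l = si P F1 c1 - d1" "finite F1" "F1 \<subseteq> A" "\<forall>x. \<bar>g x - sf F1 c1 x\<bar> \<le> d1"
      using hyp(1) unfolding L_def by blast
    show ?thesis unfolding 1(1) by (rule approx_pair[OF fA P 1(2,3) hyp(2,3) 1(4) hyp(4)])
  qed
  have ne: "L \<noteq> {}" using F0(1,2) F0' unfolding L_def by blast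
  have bdd: "bdd_above L" using bd[OF _ F0(1,2) F0'] by (rule bdd_aboveI)
  have hprop: "\<bar>si P F' c' - Sup L\<bar> \<le> d'" if "finite F'" "F' \<subseteq> A" "\<forall>x. \<bar>g x - sf F' c' x\<bar> \<le> d'" for F' c' d'
  proof -
    have "si P F' c' - d' \<in> L" using that unfolding L_def by blast
    then have "si P F' c' - d' \<le> Sup L" using bdd by (rule cSup_upper)
    moreover have "Sup L \<le> si P F' c' + d'" using ne bd[OF _ that] by (rule cSup_least)
    ultimately show ?thesis by arith
  qed
  have "fa_integral A P g = Sup L" by (rule int_char[OF fA P g hprop])
  then show ?thesis using hprop[OF F ap] by simp
qed

lemma sf_simple: "finite F \<Longrightarrow> F \<subseteq> A \<Longrightarrow> sf F c \<in> simple_fns A"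
  unfolding simple_fns_def sf_def by blast

lemma sf_Bfun: "finite F \<Longrightarrow> F \<subseteq> A \<Longrightarrow> sf F c \<in> Bfun A"
proof -
  assume a: "finite F" "F \<subseteq> A"
  show ?thesis unfolding Bfun_def
  proof (intro CollectI allI impI)
    fix e :: real assume "e > 0"
    then have "\<forall>x. \<bar>sf F c x - sf F c x\<bar> < e" by simp
    then show "\<exists>g\<in>simple_fns A. \<forall>x. \<bar>sf F c x - g x\<bar> < e" using sf_simple[OF a] by blast
  qed
qed

lemma int_sf:
  assumes "is_field A" "P \<in> pba A" "finite F" "F \<subseteq> A"
  shows "fa_integral A P (sf F c) = si P F c"
proof -
  have "\<bar>si P F c - fa_integral A P (sf F c)\<bar> \<le> 0"
    by (rule int_approx[OF assms(1,2) sf_Bfun[OF assms(3,4)] assms(3,4)]) simp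
  then show ?thesis by simp
qed

lemma zero_Bfun: "(\<lambda>x. 0) \<in> Bfun A"
  using sf_Bfun[of "{}" A "\<lambda>_. 0"] by (simp add: sf_def)

lemma int_zero:
  assumes "is_field A" "P \<in> pba A"
  shows "fa_integral A P (\<lambda>x. 0) = 0"
  using int_sf[OF assms, of "{}" "\<lambda>_. 0"] by (simp add: sf_def si_def)

lemma Bfun_lin:
  assumes g: "g \<in> Bfun A" and h: "h \<in> Bfun A"
  shows "(\<lambda>x. a * g x + h x) \<in> Bfun A"
  unfolding Bfun_def
proof (intro CollectI allI impI)
  fix \<epsilon> :: real assume e: "\<epsilon> > 0"
  define \<eta> where "\<eta> = \<epsilon> / (\<bar>a\<bar> + 2)"
  have et: "\<eta> > 0" unfolding \<eta>_def using e by (simp add: add_nonneg_pos)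
  obtain F1 c1 where 1: "finite F1" "F1 \<subseteq> A" "\<forall>x. \<bar>g x - sf F1 c1 x\<bar> < \<eta>"
    using bfun_approx[OF g et] by blast
  obtain F2 c2 where 2: "finite F2" "F2 \<subseteq> A" "\<forall>x. \<bar>h x - sf F2 c2 x\<bar> < \<eta>"
    using bfun_approx[OF h et] by blast
  let ?c = "\<lambda>E. a * ext F1 c1 E + ext F2 c2 E"
  have "\<bar>a * g x + h x - sf (F1 \<union> F2) ?c x\<bar> < \<epsilon>" for x
  proof -
    have "\<bar>a * g x + h x - sf (F1 \<union> F2) ?c x\<bar> = \<bar>a * (g x - sf F1 c1 x) + (h x - sf F2 c2 x)\<bar>"
      using comb(1)[OF 1(1) 2(1), of a c1 c2 x] by (simp add: algebra_simps)
    also have "\<dots> \<le> \<bar>a\<bar> * \<bar>g x - sf F1 c1 x\<bar> + \<bar>h x - sf F2 c2 x\<bar>"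
        using abs_triangle_ineq[of "a * (g x - sf F1 c1 x)" "h x - sf F2 c2 x"] by (simp add: abs_mult)
    also have "\<dots> \<le> \<bar>a\<bar> * \<eta> + \<eta>" using 1(3) 2(3)
      by (intro add_mono mult_left_mono) (auto simp: less_imp_le)
    also have "\<dots> < \<epsilon>"
    proof -
      have "(\<bar>a\<bar> + 2) * \<eta> = \<epsilon>" unfolding \<eta>_def by (simp add: add_nonneg_pos)
      then have "\<bar>a\<bar> * \<eta> + 2 * \<eta> = \<epsilon>" by (simp add: algebra_simps)
      then show ?thesis using et by linarith
    qed
    finally show ?thesis .
  qed
  moreover have "sf (F1 \<union> F2) ?c \<in> simple_fns A" using 1 2 by (intro sf_simple) auto
  ultimately show "\<exists>s\<in>simple_fns A. \<forall>x. \<bar>a * g x + h x - s x\<bar> < \<epsilon>" by blast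
qed

lemma int_lin:
  assumes fA: "is_field A" and P: "P \<in> pba A" and g: "g \<in> Bfun A" and h: "h \<in> Bfun A"
  shows "fa_integral A P (\<lambda>x. a * g x + h x) = a * fa_integral A P g + fa_integral A P h"
proof -
  have "fa_integral A P (\<lambda>x. a * g x + h x) - (a * fa_integral A P g + fa_integral A P h) = 0"
  proof (rule small_zero[where K="2 * \<bar>a\<bar> + 2"])
    fix \<eta> :: real assume et: "\<eta> > 0"
    obtain F1 c1 where 1: "finite F1" "F1 \<subseteq> A" "\<forall>x. \<bar>g x - sf F1 c1 x\<bar> < \<eta>"
      using bfun_approx[OF g et] by blast
    obtain F2 c2 where 2: "finite F2" "F2 \<subseteq> A" "\<forall>x. \<bar>h x - sf F2 c2 x\<bar> < \<eta>"
      using bfun_approx[OF h et] by blast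
    let ?c = "\<lambda>E. a * ext F1 c1 E + ext F2 c2 E"
    have ap: "\<forall>x. \<bar>a * g x + h x - sf (F1 \<union> F2) ?c x\<bar> \<le> \<bar>a\<bar> * \<eta> + \<eta>"
    proof
      fix x
      have "\<bar>a * g x + h x - sf (F1 \<union> F2) ?c x\<bar> = \<bar>a * (g x - sf F1 c1 x) + (h x - sf F2 c2 x)\<bar>"
        using comb(1)[OF 1(1) 2(1), of a c1 c2 x] by (simp add: algebra_simps)
      also have "\<dots> \<le> \<bar>a\<bar> * \<bar>g x - sf F1 c1 x\<bar> + \<bar>h x - sf F2 c2 x\<bar>"
        using abs_triangle_ineq[of "a * (g x - sf F1 c1 x)" "h x - sf F2 c2 x"] by (simp add: abs_mult)
      also have "\<dots> \<le> \<bar>a\<bar> * \<eta> + \<eta>" using 1(3) 2(3)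
        by (intro add_mono mult_left_mono) (auto simp: less_imp_le)
      finally show "\<bar>a * g x + h x - sf (F1 \<union> F2) ?c x\<bar> \<le> \<bar>a\<bar> * \<eta> + \<eta>" .
    qed
    have i0: "\<bar>si P (F1 \<union> F2) ?c - fa_integral A P (\<lambda>x. a * g x + h x)\<bar> \<le> \<bar>a\<bar> * \<eta> + \<eta>"
      using int_approx[OF fA P Bfun_lin[OF g h] _ _ ap] 1 2 by simp
    have i1: "\<bar>si P F1 c1 - fa_integral A P g\<bar> \<le> \<eta>"
      using int_approx[OF fA P g 1(1,2)] 1(3) by (simp add: less_imp_le)
    have i2: "\<bar>si P F2 c2 - fa_integral A P h\<bar> \<le> \<eta>"
      using int_approx[OF fA P h 2(1,2)] 2(3) by (simp add: less_imp_le)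
    have i1': "\<bar>a * si P F1 c1 - a * fa_integral A P g\<bar> \<le> \<bar>a\<bar> * \<eta>"
    proof -
      have "\<bar>a * si P F1 c1 - a * fa_integral A P g\<bar> = \<bar>a\<bar> * \<bar>si P F1 c1 - fa_integral A P g\<bar>"
        by (simp add: abs_mult[symmetric] right_diff_distrib)
      also have "\<dots> \<le> \<bar>a\<bar> * \<eta>" using i1 by (simp add: mult_left_mono)
      finally show ?thesis .
    qed
    have "si P (F1 \<union> F2) ?c = a * si P F1 c1 + si P F2 c2" by (rule comb(2)[OF 1(1) 2(1)])
    then show "\<bar>fa_integral A P (\<lambda>x. a * g x + h x) - (a * fa_integral A P g + fa_integral A P h)\<bar>
        \<le> (2 * \<bar>a\<bar> + 2) * \<eta>" using i0 i1' i2 by (simp add: algebra_simps)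
  qed
  then show ?thesis by simp
qed

lemma int_lower:
  assumes fA: "is_field A" and P: "P \<in> pba A" and g: "g \<in> Bfun A" and lb: "\<forall>x. b \<le> g x"
  shows "b \<le> fa_integral A P g"
proof (rule small_le[where K=2])
  fix \<eta> :: real assume et: "\<eta> > 0"
  obtain F c where 1: "finite F" "F \<subseteq> A" "\<forall>x. \<bar>g x - sf F c x\<bar> < \<eta>"
    using bfun_approx[OF g et] by blast
  have "\<forall>x. sf F c x \<ge> b - \<eta>"
  proof
    fix x have "\<bar>g x - sf F c x\<bar> < \<eta>" "b \<le> g x" using 1(3) lb by blast+
    then show "sf F c x \<ge> b - \<eta>" by arith
  qed
  then have "si P F c \<ge> b - \<eta>" by (rule sint_lower[OF fA P 1(1,2)])
  moreover have "\<bar>si P F c - fa_integral A P g\<bar> \<le> \<eta>"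
    using int_approx[OF fA P g 1(1,2)] 1(3) by (simp add: less_imp_le)
  ultimately show "b \<le> fa_integral A P g + 2 * \<eta>" by arith
qed

lemma Bfun_sum:
  assumes "finite I" "\<forall>i\<in>I. f i \<in> Bfun A"
  shows "(\<lambda>x. \<Sum>i\<in>I. f i x) \<in> Bfun A"
  using assms
proof (induction I rule: finite_induct)
  case empty then show ?case using zero_Bfun by simp
next
  case (insert i I)
  have "(\<lambda>x. 1 * f i x + (\<Sum>i\<in>I. f i x)) \<in> Bfun A"
    using insert by (intro Bfun_lin) auto
  then show ?case using insert.hyps by simp
qed

lemma int_sum:
  assumes fA: "is_field A" and P: "P \<in> pba A"
  shows "finite I \<Longrightarrow> \<forall>i\<in>I. f i \<in> Bfun A \<Longrightarrow> fa_integral A P (\<lambda>x. \<Sum>i\<in>I. f i x) = (\<Sum>i\<in>I. fa_integral A P (f i))"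
proof (induction I rule: finite_induct)
  case empty then show ?case using int_zero[OF fA P] by simp
next
  case (insert i I)
  have "fa_integral A P (\<lambda>x. 1 * f i x + (\<Sum>i\<in>I. f i x)) = 1 * fa_integral A P (f i) + fa_integral A P (\<lambda>x. \<Sum>i\<in>I. f i x)"
    using insert by (intro int_lin[OF fA P] Bfun_sum) auto
  then show ?case using insert by simp
qed

lemma simple_mono: "M \<subseteq> A \<Longrightarrow> simple_fns M \<subseteq> simple_fns A"
  unfolding simple_fns_def by blast

lemma Bfun_mono: "M \<subseteq> A \<Longrightarrow> Bfun M \<subseteq> Bfun A"
proof
  fix f assume a: "M \<subseteq> A" "f \<in> Bfun M"
  show "f \<in> Bfun A" unfolding Bfun_def
  proof (intro CollectI allI impI)
    fix e :: real assume "e > 0"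
    then obtain g where "g \<in> simple_fns M" "\<forall>x. \<bar>f x - g x\<bar> < e" using a(2) unfolding Bfun_def by blast
    then show "\<exists>g\<in>simple_fns A. \<forall>x. \<bar>f x - g x\<bar> < e" using simple_mono[OF a(1)] by blast
  qed
qed




lemma Bfun_scale: "g \<in> Bfun A \<Longrightarrow> (\<lambda>x. a * g x) \<in> Bfun A"
  using Bfun_lin[OF _ zero_Bfun, of g A a] by simp

lemma int_scale:
  assumes "is_field A" "P \<in> pba A" "g \<in> Bfun A"
  shows "fa_integral A P (\<lambda>x. a * g x) = a * fa_integral A P g"
  using int_lin[OF assms zero_Bfun, of a] int_zero[OF assms(1,2)] by simp

lemma ind_eq_sf: "indicator F = sf {F} (\<lambda>_. 1)"
  by (simp add: sf_def fun_eq_iff)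

lemma ind_Bfun: "F \<in> A \<Longrightarrow> (indicator F :: 'w \<Rightarrow> real) \<in> Bfun A"
  unfolding ind_eq_sf by (rule sf_Bfun) auto

lemma int_ind:
  assumes "is_field A" "P \<in> pba A" "F \<in> A"
  shows "fa_integral A P (indicator F) = P F"
  unfolding ind_eq_sf using int_sf[OF assms(1,2), of "{F}" "\<lambda>_. 1"] assms(3) by (simp add: si_def)

context
  fixes N :: "'i set" and A :: "'w set set" and M :: "'i \<Rightarrow> 'w set set"
    and t :: "'i \<Rightarrow> 'w \<Rightarrow> 'w set \<Rightarrow> real"
  assumes ts: "type_space N A M t"
begin

lemma ts_field: "is_field A" using ts by (simp add: type_space_def)
lemma ts_pba: "i \<in> N \<Longrightarrow> t i \<omega> \<in> pba A" using ts by (simp add: type_space_def)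
lemma ts_Mfield: "i \<in> N \<Longrightarrow> is_field (M i)" using ts by (simp add: type_space_def)
lemma ts_MA: "i \<in> N \<Longrightarrow> M i \<subseteq> A" using ts by (simp add: type_space_def)
lemma ts_meas: "i \<in> N \<Longrightarrow> E \<in> A \<Longrightarrow> (\<lambda>\<omega>. t i \<omega> E) \<in> Bfun (M i)" using ts by (simp add: type_space_def)
lemma ts_measA: "i \<in> N \<Longrightarrow> E \<in> A \<Longrightarrow> (\<lambda>\<omega>. t i \<omega> E) \<in> Bfun A"
  using ts_meas Bfun_mono[OF ts_MA] by blast
lemma ts_cert: "i \<in> N \<Longrightarrow> E \<in> M i \<Longrightarrow> \<omega> \<in> E \<Longrightarrow> t i \<omega> E = 1" using ts by (simp add: type_space_def)

lemma t_ind: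
  assumes i: "i \<in> N" and E: "E \<in> M i"
  shows "t i \<omega> E = indicator E \<omega>"
proof (cases "\<omega> \<in> E")
  case True then show ?thesis using ts_cert[OF i E] by simp
next
  case False
  have cE: "- E \<in> M i" using field_compl[OF ts_Mfield[OF i] E] .
  have "t i \<omega> (- E) = 1" using ts_cert[OF i cE] False by simp
  moreover have "t i \<omega> (E \<union> - E) = t i \<omega> E + t i \<omega> (- E)"
    using pba_add[OF ts_pba[OF i]] E cE ts_MA[OF i] by blast
  moreover have "t i \<omega> (E \<union> - E) = 1" using pba_UNIV[OF ts_pba[OF i]] by simp
  ultimately show ?thesis using False by simp
qed

lemma pull_out:
  assumes i: "i \<in> N" and phi: "\<phi> \<in> Bfun (M i)"
  shows "fa_integral A (t i \<omega>) \<phi> = \<phi> \<omega>"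
proof -
  have phiA: "\<phi> \<in> Bfun A" using phi Bfun_mono[OF ts_MA[OF i]] by blast
  have "fa_integral A (t i \<omega>) \<phi> - \<phi> \<omega> = 0"
  proof (rule small_zero[where K=2])
    fix \<eta> :: real assume et: "\<eta> > 0"
    obtain F c where 1: "finite F" "F \<subseteq> M i" "\<forall>x. \<bar>\<phi> x - sf F c x\<bar> < \<eta>"
      using bfun_approx[OF phi et] by blast
    have FA: "F \<subseteq> A" using 1(2) ts_MA[OF i] by blast
    have "si (t i \<omega>) F c = sf F c \<omega>"
      unfolding si_def sf_def using 1(2) t_ind[OF i] by (intro sum.cong) auto
    moreover have "\<bar>si (t i \<omega>) F c - fa_integral A (t i \<omega>) \<phi>\<bar> \<le> \<eta>"
      using int_approx[OF ts_field ts_pba[OF i] phiA 1(1) FA] 1(3) by (simp add: less_imp_le)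
    moreover have "\<bar>\<phi> \<omega> - sf F c \<omega>\<bar> < \<eta>" using 1(3) by blast
    ultimately show "\<bar>fa_integral A (t i \<omega>) \<phi> - \<phi> \<omega>\<bar> \<le> 2 * \<eta>" by arith
  qed
  then show ?thesis by simp
qed

lemma cc_UNIV: "I \<subseteq> N \<Longrightarrow> cc_component A t I UNIV"
  unfolding cc_component_def using field_UNIV[OF ts_field] pba_UNIV[OF ts_pba] by blast

lemma semibet_iff:
  "semi_bet N A t I f \<longleftrightarrow> finite I \<and> I \<subseteq> N \<and> (\<forall>i\<in>I. f i \<in> Bfun A) \<and>
     (\<forall>\<omega>. \<forall>i\<in>I. 0 \<le> fa_integral A (t i \<omega>) (f i))"
proof
  assume sb: "semi_bet N A t I f"
  have "\<forall>\<omega>. \<forall>i\<in>I. 0 \<le> fa_integral A (t i \<omega>) (f i)"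
  proof (intro allI ballI)
    fix \<omega> i assume "i \<in> I"
    have "commonly_certain A t I {\<omega>'. \<forall>i\<in>I. fa_integral A (t i \<omega>') (f i) \<ge> 0} \<omega>"
      using sb unfolding semi_bet_def by blast
    then have "\<omega> \<in> {\<omega>'. \<forall>i\<in>I. fa_integral A (t i \<omega>') (f i) \<ge> 0}"
      unfolding commonly_certain_def by blast
    then show "0 \<le> fa_integral A (t i \<omega>) (f i)" using \<open>i \<in> I\<close> by blast
  qed
  then show "finite I \<and> I \<subseteq> N \<and> (\<forall>i\<in>I. f i \<in> Bfun A) \<and> (\<forall>\<omega>. \<forall>i\<in>I. 0 \<le> fa_integral A (t i \<omega>) (f i))"
    using sb unfolding semi_bet_def by blast
next
  assume a: "finite I \<and> I \<subseteq> N \<and> (\<forall>i\<in>I. f i \<in> Bfun A) \<and> (\<forall>\<omega>. \<forall>i\<in>I. 0 \<le> fa_integral A (t i \<omega>) (f i))"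
  have cc: "cc_component A t I UNIV" using cc_UNIV a by blast
  have "{\<omega>'. \<forall>i\<in>I. fa_integral A (t i \<omega>') (f i) \<ge> 0} = UNIV" using a by blast
  then have "commonly_certain A t I {\<omega>'. \<forall>i\<in>I. fa_integral A (t i \<omega>') (f i) \<ge> 0} \<omega>" for \<omega>
    unfolding commonly_certain_def using cc by auto
  then show "semi_bet N A t I f" unfolding semi_bet_def using a by blast
qed

lemma fubini_nonneg:
  assumes k: "k \<in> N" and nu: "\<nu> \<in> pba A" and cons: "\<forall>F\<in>A. \<nu> F = fa_integral A \<nu> (\<lambda>\<omega>. t k \<omega> F)"
    and f: "f \<in> Bfun A" and pos: "\<forall>\<omega>. 0 \<le> fa_integral A (t k \<omega>) f"
  shows "0 \<le> fa_integral A \<nu> f"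
proof (rule small_le[where K=2])
  fix \<eta> :: real assume et: "\<eta> > 0"
  obtain F c where 1: "finite F" "F \<subseteq> A" "\<forall>x. \<bar>f x - sf F c x\<bar> < \<eta>"
    using bfun_approx[OF f et] by blast
  define \<phi> where "\<phi> = (\<lambda>\<omega>. \<Sum>E\<in>F. c E * t k \<omega> E)"
  have comp: "\<forall>E\<in>F. (\<lambda>\<omega>. c E * t k \<omega> E) \<in> Bfun A"
    using 1(2) ts_measA[OF k] Bfun_scale by blast
  have phiB: "\<phi> \<in> Bfun A" unfolding \<phi>_def using Bfun_sum[OF 1(1) comp] .
  have "fa_integral A \<nu> \<phi> = (\<Sum>E\<in>F. fa_integral A \<nu> (\<lambda>\<omega>. c E * t k \<omega> E))"
    unfolding \<phi>_def using int_sum[OF ts_field nu 1(1) comp] .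
  also have "\<dots> = (\<Sum>E\<in>F. c E * \<nu> E)"
  proof (rule sum.cong)
    fix E assume "E \<in> F"
    then have E: "E \<in> A" using 1(2) by blast
    show "fa_integral A \<nu> (\<lambda>\<omega>. c E * t k \<omega> E) = c E * \<nu> E"
      using int_scale[OF ts_field nu ts_measA[OF k E]] cons E by simp
  qed simp
  finally have int_phi: "fa_integral A \<nu> \<phi> = si \<nu> F c" unfolding si_def .
  have "\<phi> \<omega> \<ge> - \<eta>" for \<omega>
  proof -
    have "\<bar>si (t k \<omega>) F c - fa_integral A (t k \<omega>) f\<bar> \<le> \<eta>"
      using int_approx[OF ts_field ts_pba[OF k] f 1(1,2)] 1(3) by (simp add: less_imp_le)
    moreover have "\<phi> \<omega> = si (t k \<omega>) F c" unfolding \<phi>_def si_def ..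
    ultimately show ?thesis using pos by (smt (verit))
  qed
  then have "- \<eta> \<le> fa_integral A \<nu> \<phi>" using int_lower[OF ts_field nu phiB] by blast
  moreover have "\<bar>si \<nu> F c - fa_integral A \<nu> f\<bar> \<le> \<eta>"
    using int_approx[OF ts_field nu f 1(1,2)] 1(3) by (simp add: less_imp_le)
  ultimately show "0 \<le> fa_integral A \<nu> f + 2 * \<eta>" using int_phi by arith
qed

lemma t_in_Pi: "j \<in> N \<Longrightarrow> t j \<omega> \<in> Pi_set A t j"
proof -
  assume j: "j \<in> N"
  have tb: "t j \<omega> \<in> ba A"
  proof -
    have p: "t j \<omega> \<in> pba A" using ts_pba[OF j] .
    have "\<forall>E\<in>A. \<bar>t j \<omega> E\<bar> \<le> 1" using pba_nonneg[OF p] pba_le1[OF ts_field p] by simp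
    moreover have "\<forall>E. E \<notin> A \<longrightarrow> t j \<omega> E = 0" using pba_out[OF p] by blast
    moreover have "fin_additive A (t j \<omega>)" using p unfolding pba_def by blast
    ultimately show ?thesis unfolding ba_def by blast
  qed
  define X where "X = {\<mu> \<in> ba A. fa_integral A \<mu> (\<lambda>_. 0) \<in> (UNIV :: real set)}"
  have X: "X \<in> {{\<mu> \<in> ba A. fa_integral A \<mu> f \<in> U} | f U. f \<in> Bfun A \<and> open U}"
    unfolding X_def by (intro CollectI exI[of _ "\<lambda>_. 0"] exI[of _ UNIV] conjI refl zero_Bfun open_UNIV)
  have tX: "t j \<omega> \<in> X" unfolding X_def using tb by simp
  have top: "t j \<omega> \<in> topspace (weak_star_top A)"
    unfolding weak_star_top_def topology_generated_by_topspace using X tX by (rule UnionI)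
  have s1: "(\<Sum>k<(1::nat). (1::real)) = 1" by simp
  have s2: "(\<lambda>E. \<Sum>k<(1::nat). 1 * t j \<omega> E) = t j \<omega>" by simp
  have hull: "t j \<omega> \<in> conv_hull_sf {t j \<omega> | \<omega>. True}"
    unfolding conv_hull_sf_def
  proof (intro CollectI exI conjI)
    have "t j \<omega> \<in> {t j \<omega>' | \<omega>'. True}" by (rule CollectI, rule exI[of _ \<omega>], simp)
    then show "\<forall>k<1::nat. 0 \<le> (1::real) \<and> t j \<omega> \<in> {t j \<omega> | \<omega>. True}" by simp
    show "(\<Sum>k<(1::nat). (1::real)) = 1" by (rule s1)
    show "t j \<omega> = (\<lambda>E. \<Sum>k<(1::nat). 1 * t j \<omega> E)" using s2 by simp
  qed
  have "t j \<omega> \<in> topspace (weak_star_top A) \<inter> conv_hull_sf {t j \<omega> | \<omega>. True}" using top hull by (rule IntI)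
  then show ?thesis unfolding Pi_set_def by (rule subsetD[OF closure_of_subset_Int])
qed

end




lemma inf_one:
  assumes "\<And>E. E \<in> A \<Longrightarrow> S \<subseteq> E \<Longrightarrow> \<nu> E = (1::real)" "UNIV \<in> A"
  shows "Inf {\<nu> E |E. E \<in> A \<and> S \<subseteq> E} = 1"
proof -
  have "{\<nu> E |E. E \<in> A \<and> S \<subseteq> E} = {1}"
  proof
    show "{\<nu> E |E. E \<in> A \<and> S \<subseteq> E} \<subseteq> {1}" using assms(1) by blast
    have "\<nu> UNIV = 1" using assms by blast
    then have "1 \<in> {\<nu> E |E. E \<in> A \<and> S \<subseteq> E}" using assms(2) by (intro CollectI exI[of _ UNIV]) simp
    then show "{1} \<subseteq> {\<nu> E |E. E \<in> A \<and> S \<subseteq> E}" by blast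
  qed
  then show ?thesis by simp
qed

context
  fixes N :: "'i set" and A :: "'w set set" and M :: "'i \<Rightarrow> 'w set set"
    and t :: "'i \<Rightarrow> 'w \<Rightarrow> 'w set \<Rightarrow> real"
  assumes ts: "type_space N A M t"
begin

lemma h_Bfun:
  assumes i: "i \<in> N" and F: "F \<in> A"
  shows "(\<lambda>x. indicator F x - t i x F) \<in> Bfun A"
proof -
  have "(\<lambda>x. -1 * t i x F + indicator F x) \<in> Bfun A"
    by (rule Bfun_lin[OF ts_measA[OF ts i F] ind_Bfun[OF F]])
  moreover have "(\<lambda>x. -1 * t i x F + indicator F x) = (\<lambda>x. indicator F x - t i x F)" by (simp add: fun_eq_iff)
  ultimately show ?thesis by simp
qed

lemma h_int:
  assumes i: "i \<in> N" and F: "F \<in> A" and P: "P \<in> pba A"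
  shows "fa_integral A P (\<lambda>x. indicator F x - t i x F) = P F - fa_integral A P (\<lambda>x. t i x F)"
proof -
  have "fa_integral A P (\<lambda>x. -1 * t i x F + indicator F x) = -1 * fa_integral A P (\<lambda>x. t i x F) + fa_integral A P (indicator F)"
    by (rule int_lin[OF ts_field[OF ts] P ts_measA[OF ts i F] ind_Bfun[OF F]])
  moreover have "(\<lambda>x. -1 * t i x F + indicator F x) = (\<lambda>x. indicator F x - t i x F)" by (simp add: fun_eq_iff)
  moreover have "fa_integral A P (indicator F) = P F" by (rule int_ind[OF ts_field[OF ts] P F])
  ultimately show ?thesis by simp
qed

lemma h_self:
  assumes i: "i \<in> N" and F: "F \<in> A"
  shows "fa_integral A (t i \<omega>) (\<lambda>x. indicator F x - t i x F) = 0"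
  using h_int[OF i F ts_pba[OF ts i]] pull_out[OF ts i ts_meas[OF ts i F]] by simp

lemma dirac_pba:
  "(\<lambda>E. if E \<in> A then indicator E \<omega>0 else 0 :: real) \<in> pba A"
proof -
  have fA: "is_field A" by (rule ts_field[OF ts])
  show ?thesis unfolding pba_def fin_additive_def
    using field_Un[OF fA] field_UNIV[OF fA] by (auto simp: indicator_def)
qed

lemma part2:
  assumes U: "universal_money_pump N A t"
  shows "strong_money_pump N A t"
proof -
  have fA: "is_field A" by (rule ts_field[OF ts])
  obtain I S where I: "finite I" "I \<subseteq> N" and cc: "cc_component A t I S"
    and H: "\<forall>P\<in>pba A. Inf {P E |E. E \<in> A \<and> S \<subseteq> E} > 0 \<longrightarrow>
        (\<exists>f. semi_bet N A t I f \<and> fa_integral A P (\<lambda>\<omega>. \<Sum>i\<in>I. f i \<omega>) < 0)"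
    using U unfolding universal_money_pump_def by blast
  show ?thesis
  proof (cases "\<exists>i\<in>I. \<exists>j\<in>I. \<exists>F\<in>A. \<exists>\<omega>. fa_integral A (t j \<omega>) (\<lambda>x. indicator F x - t i x F) \<noteq> 0")
    case True
    then obtain i j F \<omega> where ij: "i \<in> I" "j \<in> I" "F \<in> A"
      and nz: "fa_integral A (t j \<omega>) (\<lambda>x. indicator F x - t i x F) \<noteq> 0" by blast
    define h where "h = (\<lambda>x. indicator F x - t i x F)"
    have iN: "i \<in> N" "j \<in> N" using ij I by auto
    have hB: "h \<in> Bfun A" unfolding h_def by (rule h_Bfun[OF iN(1) ij(3)])
    have h0: "fa_integral A (t i \<omega>') h = 0" for \<omega>' unfolding h_def by (rule h_self[OF iN(1) ij(3)])
    show ?thesis unfolding strong_money_pump_def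
    proof (intro exI[of _ I] conjI ballI)
      show "finite I" "I \<subseteq> N" using I by auto
      fix P assume P: "P \<in> pba A"
      define s :: real where "s = (if fa_integral A P h \<le> 0 then 1 else -1)"
      define f where "f = (\<lambda>k x. if k = i then s * h x else 0)"
      have fi: "f i = (\<lambda>x. s * h x)" unfolding f_def by simp
      have fk: "k \<noteq> i \<Longrightarrow> f k = (\<lambda>x. 0)" for k unfolding f_def by simp
      have sb: "semi_bet N A t I f"
        unfolding semibet_iff[OF ts]
      proof (intro conjI ballI allI)
        show "finite I" "I \<subseteq> N" using I by auto
      next
        fix k assume "k \<in> I"
        show "f k \<in> Bfun A"
        proof (cases "k = i")
          case True then show ?thesis using fi Bfun_scale[OF hB] by simp
        next
          case False then show ?thesis using fk zero_Bfun by simp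
        qed
      next
        fix \<omega>' k assume k: "k \<in> I"
        show "0 \<le> fa_integral A (t k \<omega>') (f k)"
        proof (cases "k = i")
          case True then show ?thesis
            using fi int_scale[OF fA ts_pba[OF ts iN(1)] hB, of \<omega>' s] h0 by simp
        next
          case False then show ?thesis using fk int_zero[OF fA ts_pba[OF ts]] k I by auto
        qed
      qed
      have sumf: "(\<lambda>\<omega>. \<Sum>k\<in>I. f k \<omega>) = (\<lambda>x. s * h x)"
        unfolding f_def using ij(1) I(1) by (simp add: fun_eq_iff)
      have "fa_integral A P (\<lambda>x. s * h x) = s * fa_integral A P h" by (rule int_scale[OF fA P hB])
      then have le: "fa_integral A P (\<lambda>\<omega>. \<Sum>k\<in>I. f k \<omega>) \<le> 0"
        unfolding sumf s_def by (auto simp: mult_le_0_iff)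
      have P'in: "t j \<omega> \<in> {P} \<union> (\<Union>i\<in>I. Pi_set A t i)" using t_in_Pi[OF ts iN(2)] ij(2) by blast
      have "fa_integral A (t j \<omega>) (\<lambda>x. s * h x) = s * fa_integral A (t j \<omega>) h"
        by (rule int_scale[OF fA ts_pba[OF ts iN(2)] hB])
      moreover have "s \<noteq> 0" unfolding s_def by simp
      ultimately have ne: "fa_integral A (t j \<omega>) (\<lambda>\<omega>. \<Sum>k\<in>I. f k \<omega>) \<noteq> 0"
        unfolding sumf using nz h_def by simp
      show "\<exists>f. semi_bet N A t I f \<and> fa_integral A P (\<lambda>\<omega>. \<Sum>i\<in>I. f i \<omega>) \<le> 0 \<and>
          (\<exists>P'\<in>{P} \<union> (\<Union>i\<in>I. Pi_set A t i). fa_integral A P' (\<lambda>\<omega>. \<Sum>i\<in>I. f i \<omega>) \<noteq> 0)"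
        using sb le P'in ne by blast
    qed
  next
    case False
    have cons: "t j \<omega> F = fa_integral A (t j \<omega>) (\<lambda>x. t k x F)" if "k \<in> I" "j \<in> I" "F \<in> A" for k j F \<omega>
    proof -
      have "fa_integral A (t j \<omega>) (\<lambda>x. indicator F x - t k x F) = 0" using False that by blast
      moreover have "k \<in> N" "j \<in> N" using that I by auto
      ultimately show ?thesis using h_int[of k F "t j \<omega>"] ts_pba[OF ts] that by simp
    qed
    obtain E0 where E0: "E0 \<in> A" "E0 \<subseteq> S" "\<forall>\<omega>\<in>S. \<forall>i\<in>I. t i \<omega> E0 = 1" and Sne: "S \<noteq> {}"
      using cc unfolding cc_component_def by blast
    obtain \<omega>0 where w0: "\<omega>0 \<in> S" using Sne by blast
    show ?thesis
    proof (cases "I = {}")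
      case True
      define \<nu> where "\<nu> = (\<lambda>E. if E \<in> A then indicator E \<omega>0 else 0 :: real)"
      have nup: "\<nu> \<in> pba A" unfolding \<nu>_def by (rule dirac_pba)
      have "Inf {\<nu> E |E. E \<in> A \<and> S \<subseteq> E} = 1"
        by (rule inf_one) (use w0 field_UNIV[OF fA] in \<open>auto simp: \<nu>_def\<close>)
      then obtain f where "fa_integral A \<nu> (\<lambda>\<omega>. \<Sum>i\<in>I. f i \<omega>) < 0" using H nup by auto
      then show ?thesis using True int_zero[OF fA nup] by simp
    next
      case False
      then obtain j where j: "j \<in> I" by blast
      have jN: "j \<in> N" using j I by auto
      define \<nu> where "\<nu> = t j \<omega>0"
      have nup: "\<nu> \<in> pba A" unfolding \<nu>_def by (rule ts_pba[OF ts jN])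
      have one: "\<nu> E = 1" if "E \<in> A" "S \<subseteq> E" for E
      proof -
        have "\<nu> E0 = 1" unfolding \<nu>_def using E0(3) w0 j by blast
        moreover have "\<nu> E0 \<le> \<nu> E" using pba_mono[OF fA nup E0(1) that(1)] E0(2) that(2) by blast
        moreover have "\<nu> E \<le> 1" by (rule pba_le1[OF fA nup])
        ultimately show ?thesis by simp
      qed
      have "Inf {\<nu> E |E. E \<in> A \<and> S \<subseteq> E} = 1"
        by (rule inf_one) (use one field_UNIV[OF fA] in auto)
      then obtain f where sb: "semi_bet N A t I f" and neg: "fa_integral A \<nu> (\<lambda>\<omega>. \<Sum>i\<in>I. f i \<omega>) < 0"
        using H nup by auto
      have fB: "\<forall>i\<in>I. f i \<in> Bfun A" and fpos: "\<forall>\<omega>. \<forall>i\<in>I. 0 \<le> fa_integral A (t i \<omega>) (f i)"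
        using sb unfolding semibet_iff[OF ts] by auto
      have "fa_integral A \<nu> (\<lambda>\<omega>. \<Sum>i\<in>I. f i \<omega>) = (\<Sum>i\<in>I. fa_integral A \<nu> (f i))"
        by (rule int_sum[OF fA nup I(1) fB])
      also have "\<dots> \<ge> 0"
      proof (rule sum_nonneg)
        fix k assume k: "k \<in> I"
        have kN: "k \<in> N" using k I by auto
        have "\<forall>F\<in>A. \<nu> F = fa_integral A \<nu> (\<lambda>\<omega>. t k \<omega> F)" unfolding \<nu>_def using cons k j by blast
        then show "0 \<le> fa_integral A \<nu> (f k)"
          using fubini_nonneg[OF ts kN nup _ _] fB fpos k by blast
      qed
      finally show ?thesis using neg by simp
    qed
  qed
qed

end




lemma compact_K: "compact (Pi\<^sub>E UNIV (\<lambda>_. {0..1::real}) :: ('a \<Rightarrow> real) set)"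
proof -
  have "compactin (product_topology (\<lambda>_. euclidean) UNIV) (Pi\<^sub>E UNIV (\<lambda>_::'a. {0..1::real}))"
    by (subst compactin_PiE) auto
  then show ?thesis by (simp add: euclidean_product_topology)
qed

context
  fixes N :: "'i set" and A :: "'w set set" and M :: "'i \<Rightarrow> 'w set set"
    and t :: "'i \<Rightarrow> 'w \<Rightarrow> 'w set \<Rightarrow> real"
  assumes ts: "type_space N A M t"
begin

lemma extend_bet:
  assumes sb: "semi_bet N A t I f" and J: "finite J" "J \<subseteq> N" "I \<subseteq> J"
  shows "semi_bet N A t J (\<lambda>i x. if i \<in> I then f i x else 0)"
    and "(\<lambda>x. \<Sum>i\<in>J. (if i \<in> I then f i x else 0)) = (\<lambda>x. \<Sum>i\<in>I. f i x)"
proof -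
  have fB: "\<forall>i\<in>I. f i \<in> Bfun A" and fpos: "\<forall>\<omega>. \<forall>i\<in>I. 0 \<le> fa_integral A (t i \<omega>) (f i)"
    using sb unfolding semibet_iff[OF ts] by auto
  show "semi_bet N A t J (\<lambda>i x. if i \<in> I then f i x else 0)"
    unfolding semibet_iff[OF ts]
  proof (intro conjI ballI allI)
    show "finite J" "J \<subseteq> N" using J by auto
  next
    fix i assume "i \<in> J"
    show "(\<lambda>x. if i \<in> I then f i x else 0) \<in> Bfun A"
      using fB zero_Bfun by (cases "i \<in> I") auto
  next
    fix \<omega> i assume i: "i \<in> J"
    have iN: "i \<in> N" using i J by auto
    show "0 \<le> fa_integral A (t i \<omega>) (\<lambda>x. if i \<in> I then f i x else 0)"
      using fpos int_zero[OF ts_field[OF ts] ts_pba[OF ts iN]] by (cases "i \<in> I") auto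
  qed
  show "(\<lambda>x. \<Sum>i\<in>J. (if i \<in> I then f i x else 0)) = (\<lambda>x. \<Sum>i\<in>I. f i x)"
  proof
    fix x
    have "(\<Sum>i\<in>J. (if i \<in> I then f i x else 0)) = (\<Sum>i\<in>J \<inter> I. f i x)"
      using J(1) by (simp add: sum.If_cases Int_def)
    also have "J \<inter> I = I" using J(3) by blast
    finally show "(\<Sum>i\<in>J. (if i \<in> I then f i x else 0)) = (\<Sum>i\<in>I. f i x)" .
  qed
qed

lemma part1:
  assumes mp: "money_pump N A t"
  shows "universal_money_pump N A t"
proof (rule ccontr)
  assume nu: "\<not> universal_money_pump N A t"
  have fA: "is_field A" by (rule ts_field[OF ts])
  have ex: "\<exists>P. P \<in> pba A \<and> (\<forall>f. semi_bet N A t J f \<longrightarrow> 0 \<le> fa_integral A P (\<lambda>\<omega>. \<Sum>i\<in>J. f i \<omega>))"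
    if J: "finite J" "J \<subseteq> N" for J
  proof -
    have cc: "cc_component A t J UNIV" by (rule cc_UNIV[OF ts J(2)])
    have "\<not> (\<forall>P\<in>pba A. Inf {P E |E. E \<in> A \<and> UNIV \<subseteq> E} > 0 \<longrightarrow>
        (\<exists>f. semi_bet N A t J f \<and> fa_integral A P (\<lambda>\<omega>. \<Sum>i\<in>J. f i \<omega>) < 0))"
      using nu J cc unfolding universal_money_pump_def by blast
    then obtain P where P: "P \<in> pba A"
      and no: "\<not> (\<exists>f. semi_bet N A t J f \<and> fa_integral A P (\<lambda>\<omega>. \<Sum>i\<in>J. f i \<omega>) < 0)"
      by blast
    then show ?thesis by (intro exI[of _ P]) auto
  qed
  define Pc where "Pc J = (SOME P. P \<in> pba A \<and> (\<forall>f. semi_bet N A t J f \<longrightarrow> 0 \<le> fa_integral A P (\<lambda>\<omega>. \<Sum>i\<in>J. f i \<omega>)))" for J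
  have Pc: "Pc J \<in> pba A \<and> (\<forall>f. semi_bet N A t J f \<longrightarrow> 0 \<le> fa_integral A (Pc J) (\<lambda>\<omega>. \<Sum>i\<in>J. f i \<omega>))"
    if "finite J" "J \<subseteq> N" for J
    unfolding Pc_def by (rule someI_ex[OF ex[OF that]])
  define K where "K = (Pi\<^sub>E UNIV (\<lambda>_. {0..1::real}) :: ('w set \<Rightarrow> real) set)"
  define Fl where "Fl = filtermap Pc (finite_subsets_at_top N)"
  have Flne: "Fl \<noteq> bot" unfolding Fl_def by (simp add: filtermap_bot_iff)
  have evK: "eventually (\<lambda>x. x \<in> K) Fl"
    unfolding Fl_def eventually_filtermap
  proof (rule eventually_finite_subsets_at_top_weakI)
    fix J assume "finite J" "J \<subseteq> N"
    then have p: "Pc J \<in> pba A" using Pc by blast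
    show "Pc J \<in> K" unfolding K_def PiE_UNIV_domain
      using pba_nonneg[OF p] pba_le1[OF fA p] by auto
  qed
  obtain P where PK: "P \<in> K" and cl: "inf (nhds P) Fl \<noteq> bot"
    using compact_K[unfolded compact_filter] Flne evK unfolding K_def by blast
  have approx: "\<exists>J. R J \<and> (\<forall>E\<in>Es. \<bar>Pc J E - P E\<bar> < \<eta>)"
    if Es: "finite Es" and et: "\<eta> > 0" and R: "eventually R (finite_subsets_at_top N)" for Es \<eta> R
  proof (rule ccontr)
    assume nex: "\<not> (\<exists>J. R J \<and> (\<forall>E\<in>Es. \<bar>Pc J E - P E\<bar> < \<eta>))"
    define U where "U = {Q. \<forall>E\<in>Es. Q E \<in> ball (P E) \<eta>}"
    have oU: "open U" unfolding U_def
      using product_topology_basis'[OF Es, of "\<lambda>E. ball (P E) \<eta>" "\<lambda>E. E"] by simp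
    have PU: "P \<in> U" unfolding U_def using et by simp
    have e1: "eventually (\<lambda>Q. Q \<in> U) (nhds P)" by (rule eventually_nhds_in_open[OF oU PU])
    have e2: "eventually (\<lambda>Q. Q \<notin> U) Fl"
      unfolding Fl_def eventually_filtermap
      using R
    proof (rule eventually_mono)
      fix J assume "R J"
      then have "\<not> (\<forall>E\<in>Es. \<bar>Pc J E - P E\<bar> < \<eta>)" using nex by blast
      then show "Pc J \<notin> U" unfolding U_def by (auto simp: dist_real_def abs_minus_commute)
    qed
    have "eventually (\<lambda>x. False) (inf (nhds P) Fl)"
      unfolding eventually_inf using e1 e2 by blast
    then show False using cl by (simp add: eventually_False)
  qed
  have base: "eventually (\<lambda>J. finite J \<and> J \<subseteq> N) (finite_subsets_at_top N)"
    by (rule eventually_finite_subsets_at_top_weakI) auto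
  have approx1: "\<exists>J. finite J \<and> J \<subseteq> N \<and> (\<forall>E\<in>Es. \<bar>Pc J E - P E\<bar> < \<eta>)"
    if "finite Es" "\<eta> > 0" for Es \<eta>
    using approx[OF that base] by blast
  have Ppba: "P \<in> pba A"
    unfolding pba_def fin_additive_def
  proof (intro CollectI conjI allI impI ballI)
    fix E assume E: "E \<notin> A"
    have "P E - 0 = 0"
    proof (rule small_zero[where K=1])
      fix \<eta> :: real assume "\<eta> > 0"
      then obtain J where J: "finite J" "J \<subseteq> N" "\<bar>Pc J E - P E\<bar> < \<eta>" using approx1[of "{E}" \<eta>] by auto
      have "Pc J E = 0" using pba_out[OF _ E] Pc J by blast
      then show "\<bar>P E - 0\<bar> \<le> 1 * \<eta>" using J(3) by simp
    qed
    then show "P E = 0" by simp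
  next
    fix E assume E: "E \<in> A"
    show "0 \<le> P E"
    proof (rule small_le[where K=1])
      fix \<eta> :: real assume "\<eta> > 0"
      then obtain J where J: "finite J" "J \<subseteq> N" "\<bar>Pc J E - P E\<bar> < \<eta>" using approx1[of "{E}" \<eta>] by auto
      have "0 \<le> Pc J E" using pba_nonneg Pc J by blast
      then show "0 \<le> P E + 1 * \<eta>" using J(3) by arith
    qed
  next
    fix E F assume E: "E \<in> A" and F: "F \<in> A" and d: "E \<inter> F = {}"
    have "P (E \<union> F) - (P E + P F) = 0"
    proof (rule small_zero[where K=3])
      fix \<eta> :: real assume "\<eta> > 0"
      then obtain J where J: "finite J" "J \<subseteq> N" "\<forall>G\<in>{E, F, E \<union> F}. \<bar>Pc J G - P G\<bar> < \<eta>"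
        using approx1[of "{E, F, E \<union> F}" \<eta>] by auto
      have "Pc J (E \<union> F) = Pc J E + Pc J F" using pba_add[OF _ E F d] Pc J by blast
      moreover have "\<bar>Pc J E - P E\<bar> < \<eta>" "\<bar>Pc J F - P F\<bar> < \<eta>" "\<bar>Pc J (E \<union> F) - P (E \<union> F)\<bar> < \<eta>"
        using J(3) by auto
      ultimately show "\<bar>P (E \<union> F) - (P E + P F)\<bar> \<le> 3 * \<eta>" by arith
    qed
    then show "P (E \<union> F) = P E + P F" by simp
  next
    have "P UNIV - 1 = 0"
    proof (rule small_zero[where K=1])
      fix \<eta> :: real assume "\<eta> > 0"
      then obtain J where J: "finite J" "J \<subseteq> N" "\<bar>Pc J UNIV - P UNIV\<bar> < \<eta>" using approx1[of "{UNIV}" \<eta>] by auto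
      have "Pc J UNIV = 1" using pba_UNIV Pc J by blast
      then show "\<bar>P UNIV - 1\<bar> \<le> 1 * \<eta>" using J(3) by arith
    qed
    then show "P UNIV = 1" by simp
  qed
  obtain I f where sb: "semi_bet N A t I f" and neg: "fa_integral A P (\<lambda>\<omega>. \<Sum>i\<in>I. f i \<omega>) < 0"
    using mp Ppba unfolding money_pump_def by blast
  have I: "finite I" "I \<subseteq> N" and fB: "\<forall>i\<in>I. f i \<in> Bfun A"
    using sb unfolding semibet_iff[OF ts] by auto
  define g where "g = (\<lambda>\<omega>. \<Sum>i\<in>I. f i \<omega>)"
  have gB: "g \<in> Bfun A" unfolding g_def by (rule Bfun_sum[OF I(1) fB])
  have "0 \<le> fa_integral A P g"
  proof (rule small_le[where K=3])
    fix \<eta> :: real assume et: "\<eta> > 0"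
    obtain Fs c where 1: "finite Fs" "Fs \<subseteq> A" "\<forall>x. \<bar>g x - sf Fs c x\<bar> < \<eta>"
      using bfun_approx[OF gB et] by blast
    define B where "B = 1 + (\<Sum>E\<in>Fs. \<bar>c E\<bar>)"
    have Bpos: "B > 0" unfolding B_def by (simp add: add_pos_nonneg sum_nonneg)
    have RI: "eventually (\<lambda>J. finite J \<and> J \<subseteq> N \<and> I \<subseteq> J) (finite_subsets_at_top N)"
      unfolding eventually_finite_subsets_at_top using I by blast
    obtain J where J: "finite J" "J \<subseteq> N" "I \<subseteq> J" and close: "\<forall>E\<in>Fs. \<bar>Pc J E - P E\<bar> < \<eta> / B"
      using approx[OF 1(1) divide_pos_pos[OF et Bpos] RI] by blast
    have PcJ: "Pc J \<in> pba A" using Pc J(1,2) by blast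
    have "0 \<le> fa_integral A (Pc J) (\<lambda>\<omega>. \<Sum>i\<in>J. (if i \<in> I then f i \<omega> else 0))"
      using Pc[OF J(1,2)] extend_bet(1)[OF sb J] by blast
    then have g0: "0 \<le> fa_integral A (Pc J) g" unfolding g_def extend_bet(2)[OF sb J] .
    have a1: "\<bar>si (Pc J) Fs c - fa_integral A (Pc J) g\<bar> \<le> \<eta>"
      using int_approx[OF fA PcJ gB 1(1,2)] 1(3) by (simp add: less_imp_le)
    have a2: "\<bar>si P Fs c - fa_integral A P g\<bar> \<le> \<eta>"
      using int_approx[OF fA Ppba gB 1(1,2)] 1(3) by (simp add: less_imp_le)
    have "\<bar>si (Pc J) Fs c - si P Fs c\<bar> = \<bar>\<Sum>E\<in>Fs. c E * (Pc J E - P E)\<bar>"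
      unfolding si_def by (simp add: sum_subtractf right_diff_distrib)
    also have "\<dots> \<le> (\<Sum>E\<in>Fs. \<bar>c E * (Pc J E - P E)\<bar>)" by (rule sum_abs)
    also have "\<dots> \<le> (\<Sum>E\<in>Fs. \<bar>c E\<bar> * (\<eta> / B))"
    proof (rule sum_mono)
      fix E assume "E \<in> Fs"
      then have "\<bar>Pc J E - P E\<bar> \<le> \<eta> / B" using close by (simp add: less_imp_le)
      from mult_left_mono[OF this abs_ge_zero[of "c E"]]
      show "\<bar>c E * (Pc J E - P E)\<bar> \<le> \<bar>c E\<bar> * (\<eta> / B)"
        by (simp only: abs_mult)
    qed
    also have "\<dots> = (\<Sum>E\<in>Fs. \<bar>c E\<bar>) * (\<eta> / B)" by (rule sum_distrib_right[symmetric])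
    also have "\<dots> \<le> B * (\<eta> / B)" unfolding B_def using et Bpos
      by (intro mult_right_mono) auto
    also have "\<dots> = \<eta>" using Bpos by simp
    finally have a3: "\<bar>si (Pc J) Fs c - si P Fs c\<bar> \<le> \<eta>" .
    show "0 \<le> fa_integral A P g + 3 * \<eta>" using g0 a1 a2 a3 by arith
  qed
  then show False using neg unfolding g_def by simp
qed

end



theorem proposition8:
  fixes N :: "'i set" and A :: "'w set set" and M :: "'i \<Rightarrow> 'w set set"
    and t :: "'i \<Rightarrow> 'w \<Rightarrow> 'w set \<Rightarrow> real"
  assumes "type_space N A M t"
  shows "(money_pump N A t \<longrightarrow> universal_money_pump N A t) \<and>
         (universal_money_pump N A t \<longrightarrow> strong_money_pump N A t)"
  using part1[OF assms] part2[OF assms] by blast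

end
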